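(* Consider the cache-aided combination network described in the context with user cache size $M$ and relay cache size $N$ satisfying $0<M+rN\le D$. Then every achievable rate pair $(R_1,R_2)$ satisfies $$R_1\ge \max\left(\max_{l\in\{r,\dots,h\}}\ \max_{s\in\{1,\dots,\min(D,\binom{l}{r})\}}\frac1l\Big(s-\frac{sM+lN}{\lfloor D/s\rfloor}\Big),\ \max_{x\in\{1,\dots,\min(D,K)\}}\frac1u\Big(x-\frac{xM+uN}{\lfloor D/x\rfloor}\Big)\right),$$ where $u=\min(x+r-1,h)$, and $$R_2\ge \frac1r\Big(1-\frac MD\Big).$$
   Context: Combination network: a server holds $D$ independent files $W_1,\dots,W_D$, each uniformly distributed over $F$ bits. There are $h$ relay nodes $\Gamma_1,\dots,\Gamma_h$ and $K=\binom{h}{r}$ end users ($r<h$); each end user is connected to a distinct set of $r$ relays (one user for each $r$-subset), so each relay is connected to $\hat K=\binom{h-1}{r-1}$ users. The server is connected to every relay; all links are noiseless unicast links. Assume $K\le D$. Each end user has a cache of $MF$ bits, each relay a cache of $NF$ bits. Placement phase (before demands): relay $j$ stores $V_j$, user $k$ stores $Z_k$, functions of the files with $H(V_j)\le NF$, $H(Z_k)\le MF$. Delivery phase: user $k$ requests $W_{d_k}$ for an arbitrary demand vector $\mathbf d\in\{1,\dots,D\}^K$; the server sends relay $\Gamma_i$ a signal $X_{i,\mathbf d}$ of $R_1F$ bits; relay $\Gamma_i$ sends each connected user $k$ a signal $Y_{i,\mathbf d,k}$ of $R_2F$ bits, a function of $X_{i,\mathbf d},V_i,\mathbf d$; user $k$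 decodes from $Z_k$, $\mathbf d$ and its $r$ received signals. $(R_1,R_2)$ (normalized by $F$) is achievable if for every $\epsilon>0$ and all sufficiently large $F$ there is such a scheme with $\max_{\mathbf d,k}P(\hat W_{d_k}\ne W_{d_k})<\epsilon$. *)

theory Defs
  imports Complex_Main "HOL-Library.FuncSet"
begin

text \<open>A realization of the library: files indexed 1..D, each an F-bit string.
  Files are independent and uniform, i.e. the library is uniform over this finite set.\<close>
definition file_tuples :: "nat \<Rightarrow> nat \<Rightarrow> (nat \<Rightarrow> bool list) set" where
  "file_tuples D F = PiE {1..D} (\<lambda>_. {xs. length xs = F})"

text \<open>End users: one per r-subset of the relays {1..h}; a user is identified with its relay set.\<close>
definition users :: "nat \<Rightarrow> nat \<Rightarrow> nat set set" where
  "users h r = {A. A \<subseteq> {1..h} \<and> card A = r}"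

definition demands :: "nat \<Rightarrow> nat \<Rightarrow> nat \<Rightarrow> (nat set \<Rightarrow> nat) set" where
  "demands h r D = PiE (users h r) (\<lambda>_. {1..D})"

definition unif_prob :: "'a set \<Rightarrow> ('a \<Rightarrow> 'b) \<Rightarrow> 'b \<Rightarrow> real" where
  "unif_prob S f v = real (card {w \<in> S. f w = v}) / real (card S)"

definition unif_entropy :: "'a set \<Rightarrow> ('a \<Rightarrow> 'b) \<Rightarrow> real" where
  "unif_entropy S f = (\<Sum>v \<in> f ` S. - unif_prob S f v * log 2 (unif_prob S f v))"

text \<open>V j w  : content of relay j's cache;  Z k w : content of user k's cache;
  X i d w : server-to-relay-i signal under demand d;
  Y i d k x v : relay i's signal to user k, a function of the received x, its cache v and d;
  Dec k d z y : user k's estimate from its cache z, d and its received signals (y i, i \<in> k).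
  err_bound: for every demand and user the error probability is < eps.\<close>
definition scheme_ok ::
  "nat \<Rightarrow> nat \<Rightarrow> nat \<Rightarrow> real \<Rightarrow> real \<Rightarrow> real \<Rightarrow> real \<Rightarrow> real \<Rightarrow> nat
   \<Rightarrow> (nat \<Rightarrow> (nat \<Rightarrow> bool list) \<Rightarrow> nat)
   \<Rightarrow> (nat set \<Rightarrow> (nat \<Rightarrow> bool list) \<Rightarrow> nat)
   \<Rightarrow> (nat \<Rightarrow> (nat set \<Rightarrow> nat) \<Rightarrow> (nat \<Rightarrow> bool list) \<Rightarrow> nat)
   \<Rightarrow> (nat \<Rightarrow> (nat set \<Rightarrow> nat) \<Rightarrow> nat set \<Rightarrow> nat \<Rightarrow> nat \<Rightarrow> nat)
   \<Rightarrow> (nat set \<Rightarrow> (nat set \<Rightarrow> nat) \<Rightarrow> nat \<Rightarrow> (nat \<Rightarrow> nat) \<Rightarrow> bool list) \<Rightarrow> bool" where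
  "scheme_ok h r D M N R1 R2 eps F V Z X Y Dec \<longleftrightarrow>
     (let W = file_tuples D F in
      (\<forall>j \<in> {1..h}. unif_entropy W (V j) \<le> N * real F) \<and>
      (\<forall>k \<in> users h r. unif_entropy W (Z k) \<le> M * real F) \<and>
      (\<forall>d \<in> demands h r D. \<forall>i \<in> {1..h}.
          real (card (X i d ` W)) \<le> 2 powr (R1 * real F)) \<and>
      (\<forall>d \<in> demands h r D. \<forall>i \<in> {1..h}. \<forall>k \<in> users h r. i \<in> k \<longrightarrow>
          real (card ((\<lambda>w. Y i d k (X i d w) (V i w)) ` W)) \<le> 2 powr (R2 * real F)) \<and>
      (\<forall>d \<in> demands h r D. \<forall>k \<in> users h r.
          real (card {w \<in> W. Dec k d (Z k w)
                   (\<lambda>i. if i \<in> k then Y i d k (X i d w) (V i w) else 0) \<noteq> w (d k)})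
            / real (card W) < eps))"

definition achievable :: "nat \<Rightarrow> nat \<Rightarrow> nat \<Rightarrow> real \<Rightarrow> real \<Rightarrow> real \<Rightarrow> real \<Rightarrow> bool" where
  "achievable h r D M N R1 R2 \<longleftrightarrow>
     (\<forall>eps > 0. \<exists>F0. \<forall>F \<ge> F0.
        \<exists>V Z X Y Dec. scheme_ok h r D M N R1 R2 eps F V Z X Y Dec)"

end

theory Submission
  imports Defs
begin

lemma regroup:
  assumes "finite S"
  shows "(\<Sum>w\<in>S. g (f w)) = (\<Sum>v\<in>f ` S. real (card {w\<in>S. f w = v}) * g v)"
proof -
  have "(\<Sum>w\<in>S. g (f w)) = (\<Sum>v\<in>f ` S. \<Sum>w\<in>{x\<in>S. f x = v}. g (f w))"
    using sum.image_gen[OF assms, of "\<lambda>w. g (f w)" f] .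
  also have "\<dots> = (\<Sum>v\<in>f ` S. \<Sum>w\<in>{x\<in>S. f x = v}. g v)"
    by (rule sum.cong) auto
  also have "\<dots> = (\<Sum>v\<in>f ` S. real (card {w\<in>S. f w = v}) * g v)" by simp
  finally show ?thesis .
qed

lemma fiber_card_pos:
  assumes "finite S" "w \<in> S"
  shows "card {x\<in>S. f x = f w} > 0"
  using assms by (subst card_gt_0_iff) auto

lemma prob_pos:
  assumes "finite S" "w \<in> S"
  shows "unif_prob S f (f w) > 0"
proof -
  have "card S > 0" using assms card_gt_0_iff by blast
  then show ?thesis using fiber_card_pos[OF assms, of f] unfolding unif_prob_def by simp
qed

lemma prob_le1:
  assumes "finite S"
  shows "unif_prob S f v \<le> 1"
proof -
  have "card {w\<in>S. f w = v} \<le> card S" using assms by (intro card_mono) auto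
  then show ?thesis unfolding unif_prob_def
    by (cases "card S = 0") (auto simp: divide_le_eq_1)
qed

lemma entropy_expect:
  assumes "finite S"
  shows "unif_entropy S f = (\<Sum>w\<in>S. - log 2 (unif_prob S f (f w))) / card S"
proof (cases "S = {}")
  case True then show ?thesis by (simp add: unif_entropy_def)
next
  case False
  have cS: "real (card S) > 0" using assms False by (simp add: card_gt_0_iff)
  have "(\<Sum>w\<in>S. - log 2 (unif_prob S f (f w))) =
        (\<Sum>v\<in>f ` S. real (card {w\<in>S. f w = v}) * (- log 2 (unif_prob S f v)))"
    by (rule regroup[OF assms])
  also have "\<dots> = (\<Sum>v\<in>f ` S. card S * (unif_prob S f v * (- log 2 (unif_prob S f v))))"
  proof (rule sum.cong)
    fix v
    have "real (card {w\<in>S. f w = v}) = card S * unif_prob S f v"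
      using cS unfolding unif_prob_def by simp
    then show "real (card {w\<in>S. f w = v}) * (- log 2 (unif_prob S f v)) =
       card S * (unif_prob S f v * (- log 2 (unif_prob S f v)))" by simp
  qed simp
  also have "\<dots> = card S * unif_entropy S f"
    unfolding unif_entropy_def by (simp add: sum_distrib_left)
  finally show ?thesis using cS by simp
qed

lemma jensen_log:
  assumes "finite S" "S \<noteq> {}" "\<And>w. w \<in> S \<Longrightarrow> x w > 0"
  shows "(\<Sum>w\<in>S. log 2 (x w)) \<le> card S * log 2 ((\<Sum>w\<in>S. x w) / card S)"
proof -
  define n where "n = real (card S)"
  have n: "n > 0" using assms unfolding n_def by (simp add: card_gt_0_iff)
  define m where "m = (\<Sum>w\<in>S. x w) / n"
  have "(\<Sum>w\<in>S. x w) > 0" using assms by (intro sum_pos) auto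
  then have m: "m > 0" using n unfolding m_def by simp
  have "(\<Sum>w\<in>S. log 2 (x w) - log 2 m) \<le> (\<Sum>w\<in>S. (x w / m - 1) / ln 2)"
  proof (rule sum_mono)
    fix w assume w: "w \<in> S"
    have "log 2 (x w) - log 2 m = ln (x w / m) / ln 2"
      using assms(3)[OF w] m by (simp add: log_def ln_div diff_divide_distrib)
    also have "\<dots> \<le> (x w / m - 1) / ln 2"
      using ln_le_minus_one[of "x w / m"] assms(3)[OF w] m by (simp add: divide_right_mono)
    finally show "log 2 (x w) - log 2 m \<le> (x w / m - 1) / ln 2" .
  qed
  also have "\<dots> = ((\<Sum>w\<in>S. x w) / m - n) / ln 2"
    by (simp add: sum_divide_distrib[symmetric] sum_subtractf n_def)
  also have "\<dots> = 0" using n m unfolding m_def by (auto simp: field_simps)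
  finally have "(\<Sum>w\<in>S. log 2 (x w)) - n * log 2 m \<le> 0"
    by (simp add: sum_subtractf n_def)
  then show ?thesis unfolding m_def n_def by linarith
qed


lemma sum_inv_fiber:
  assumes "finite S"
  shows "(\<Sum>w\<in>S. 1 / real (card {x\<in>S. f x = f w})) = card (f ` S)"
proof -
  have "(\<Sum>w\<in>S. 1 / real (card {x\<in>S. f x = f w})) =
     (\<Sum>v\<in>f ` S. real (card {w\<in>S. f w = v}) * (1 / real (card {x\<in>S. f x = v})))"
    by (rule regroup[OF assms])
  also have "\<dots> = (\<Sum>v\<in>f ` S. 1)"
  proof (rule sum.cong)
    fix v assume "v \<in> f ` S"
    then obtain w where "w \<in> S" "v = f w" by auto
    then have "card {x\<in>S. f x = v} > 0" using fiber_card_pos[OF assms] by blast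
    then show "real (card {w\<in>S. f w = v}) * (1 / real (card {x\<in>S. f x = v})) = 1" by simp
  qed simp
  finally show ?thesis by simp
qed

lemma sum_fiber_card:
  assumes "finite S"
  shows "(\<Sum>v\<in>f ` S. real (card {w\<in>S. f w = v})) = card S"
  using regroup[OF assms, of "\<lambda>_. (1::real)" f] by simp

lemma neglog_prob:
  assumes "finite S" "w \<in> S"
  shows "- log 2 (unif_prob S f (f w)) = log 2 (card S / card {x\<in>S. f x = f w})"
proof -
  have a: "real (card {x\<in>S. f x = f w}) > 0" using fiber_card_pos[OF assms] by simp
  have b: "real (card S) > 0" using assms by (simp add: card_gt_0_iff, blast)
  show ?thesis unfolding unif_prob_def using a b by (simp add: log_divide)
qed

lemma entropy_le_log_card:
  assumes "finite S" "S \<noteq> {}"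
  shows "unif_entropy S f \<le> log 2 (card (f ` S))"
proof -
  have b: "real (card S) > 0" using assms by (simp add: card_gt_0_iff)
  have "(\<Sum>w\<in>S. - log 2 (unif_prob S f (f w))) = (\<Sum>w\<in>S. log 2 (card S / card {x\<in>S. f x = f w}))"
    using neglog_prob[OF assms(1), of _ f] by (intro sum.cong) auto
  also have "\<dots> \<le> card S * log 2 ((\<Sum>w\<in>S. card S / card {x\<in>S. f x = f w}) / card S)"
    apply (rule jensen_log[OF assms])
    using fiber_card_pos[OF assms(1), of _ f] b by (simp add: divide_pos_pos)
  also have "(\<Sum>w\<in>S. card S / card {x\<in>S. f x = f w}) = card S * card (f ` S)"
  proof -
    have "(\<Sum>w\<in>S. card S / card {x\<in>S. f x = f w}) = card S * (\<Sum>w\<in>S. 1 / card {x\<in>S. f x = f w})"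
      by (simp add: sum_distrib_left)
    then show ?thesis using sum_inv_fiber[OF assms(1), of f] by simp
  qed
  finally have "(\<Sum>w\<in>S. - log 2 (unif_prob S f (f w))) \<le> card S * log 2 (card (f ` S))"
    using b by simp
  then show ?thesis unfolding entropy_expect[OF assms(1)] using b by (simp add: divide_le_eq mult.commute)
qed

lemma entropy_nonneg:
  assumes "finite S"
  shows "unif_entropy S f \<ge> 0"
proof -
  have "(\<Sum>w\<in>S. - log 2 (unif_prob S f (f w))) \<ge> 0"
  proof (rule sum_nonneg)
    fix w assume "w \<in> S"
    then have "unif_prob S f (f w) > 0" "unif_prob S f (f w) \<le> 1"
      using prob_pos[OF assms] prob_le1[OF assms] by auto
    then show "- log 2 (unif_prob S f (f w)) \<ge> 0" by simp
  qed
  then show ?thesis unfolding entropy_expect[OF assms] by simp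
qed

lemma entropy_const:
  assumes "finite S"
  shows "unif_entropy S (\<lambda>w. c) = 0"
proof -
  have "\<And>w. w \<in> S \<Longrightarrow> unif_prob S (\<lambda>w. c) c = 1"
    unfolding unif_prob_def using assms by (auto simp: card_gt_0_iff)
  then show ?thesis unfolding entropy_expect[OF assms] by simp
qed

lemma entropy_func:
  assumes "finite S"
  shows "unif_entropy S (\<lambda>w. \<phi> (f w)) \<le> unif_entropy S f"
proof -
  have "(\<Sum>w\<in>S. - log 2 (unif_prob S (\<lambda>w. \<phi> (f w)) (\<phi> (f w)))) \<le> (\<Sum>w\<in>S. - log 2 (unif_prob S f (f w)))"
  proof (rule sum_mono)
    fix w assume w: "w \<in> S"
    have "card {x\<in>S. f x = f w} \<le> card {x\<in>S. \<phi> (f x) = \<phi> (f w)}"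
      using assms by (intro card_mono) auto
    then have "unif_prob S f (f w) \<le> unif_prob S (\<lambda>w. \<phi> (f w)) (\<phi> (f w))"
      unfolding unif_prob_def by (simp add: divide_right_mono)
    then show "- log 2 (unif_prob S (\<lambda>w. \<phi> (f w)) (\<phi> (f w))) \<le> - log 2 (unif_prob S f (f w))"
      using prob_pos[OF assms w, of f] by simp
  qed
  then show ?thesis unfolding entropy_expect[OF assms] by (simp add: divide_right_mono)
qed


lemma entropy_pair:
  assumes fin: "finite S"
  shows "unif_entropy S (\<lambda>w. (f w, g w)) \<le> unif_entropy S f + unif_entropy S g"
proof (cases "S = {}")
  case True then show ?thesis by (simp add: unif_entropy_def)
next
  case ne: False
  define n where "n = real (card S)"
  have n: "n > 0" using fin ne unfolding n_def by (simp add: card_gt_0_iff)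
  define a where "a x = real (card {w\<in>S. f w = x})" for x
  define b where "b y = real (card {w\<in>S. g w = y})" for y
  define c where "c p = real (card {w\<in>S. (f w, g w) = p})" for p
  have apos: "a (f w) > 0" if "w \<in> S" for w unfolding a_def using fiber_card_pos[OF fin that] by simp
  have bpos: "b (g w) > 0" if "w \<in> S" for w unfolding b_def using fiber_card_pos[OF fin that] by simp
  have cpos: "c (f w, g w) > 0" if "w \<in> S" for w
    unfolding c_def using fiber_card_pos[OF fin that, of "\<lambda>w. (f w, g w)"] by simp
  have pf: "unif_prob S f (f w) = a (f w) / n" for w unfolding unif_prob_def a_def n_def by simp
  have pg: "unif_prob S g (g w) = b (g w) / n" for w unfolding unif_prob_def b_def n_def by simp
  have pc: "unif_prob S (\<lambda>w. (f w, g w)) (f w, g w) = c (f w, g w) / n" for w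
    unfolding unif_prob_def c_def n_def by simp
  have key: "(\<Sum>w\<in>S. a (f w) * b (g w) / c (f w, g w)) \<le> n * n"
  proof -
    have "(\<Sum>w\<in>S. a (f w) * b (g w) / c (f w, g w)) =
      (\<Sum>p\<in>(\<lambda>w. (f w, g w)) ` S. real (card {w\<in>S. (f w, g w) = p}) * (a (fst p) * b (snd p) / c p))"
      using regroup[OF fin, of "\<lambda>p. a (fst p) * b (snd p) / c p" "\<lambda>w. (f w, g w)"] by simp
    also have "\<dots> = (\<Sum>p\<in>(\<lambda>w. (f w, g w)) ` S. a (fst p) * b (snd p))"
    proof (rule sum.cong)
      fix p assume "p \<in> (\<lambda>w. (f w, g w)) ` S"
      then obtain w where "w \<in> S" "p = (f w, g w)" by auto
      then have "c p > 0" using cpos by simp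
      then show "real (card {w\<in>S. (f w, g w) = p}) * (a (fst p) * b (snd p) / c p) = a (fst p) * b (snd p)"
        unfolding c_def by simp
    qed simp
    also have "\<dots> \<le> (\<Sum>p\<in>f ` S \<times> g ` S. a (fst p) * b (snd p))"
      by (rule sum_mono2) (auto simp: fin a_def b_def)
    also have "\<dots> = (\<Sum>x\<in>f ` S. a x) * (\<Sum>y\<in>g ` S. b y)"
      by (simp add: sum_product sum.cartesian_product case_prod_beta')
    also have "\<dots> = n * n"
      using sum_fiber_card[OF fin, of f] sum_fiber_card[OF fin, of g] unfolding a_def b_def n_def by simp
    finally show ?thesis .
  qed
  define Q where "Q = (\<Sum>w\<in>S. a (f w) * b (g w) / (c (f w, g w) * n)) / card S"
  have J: "(\<Sum>w\<in>S. log 2 (a (f w) * b (g w) / (c (f w, g w) * n))) \<le> card S * log 2 Q"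
    unfolding Q_def by (rule jensen_log[OF fin ne]) (use apos bpos cpos n in auto)
  have Qeq: "Q = (\<Sum>w\<in>S. a (f w) * b (g w) / c (f w, g w)) / (n * n)"
  proof -
    have "(\<Sum>w\<in>S. a (f w) * b (g w) / (c (f w, g w) * n)) = (\<Sum>w\<in>S. a (f w) * b (g w) / c (f w, g w)) / n"
      by (simp add: sum_divide_distrib)
    then show ?thesis unfolding Q_def n_def by simp
  qed
  have "log 2 Q \<le> 0"
  proof -
    have "(\<Sum>w\<in>S. a (f w) * b (g w) / c (f w, g w)) > 0"
      using apos bpos cpos ne fin by (intro sum_pos) auto
    moreover have "(\<Sum>w\<in>S. a (f w) * b (g w) / c (f w, g w)) / (n * n) \<le> 1"
      using key n by simp
    ultimately show ?thesis using n unfolding Qeq by simp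
  qed
  then have L: "(\<Sum>w\<in>S. log 2 (a (f w) * b (g w) / (c (f w, g w) * n))) \<le> 0"
    using J by (smt (verit) mult_nonneg_nonpos of_nat_0_le_iff)
  have eq: "- log 2 (unif_prob S (\<lambda>w. (f w, g w)) (f w, g w)) =
     - log 2 (unif_prob S f (f w)) - log 2 (unif_prob S g (g w)) + log 2 (a (f w) * b (g w) / (c (f w, g w) * n))"
    if "w \<in> S" for w
    unfolding pf pg pc using apos[OF that] bpos[OF that] cpos[OF that] n
    by (simp add: log_divide log_mult)
  have "(\<Sum>w\<in>S. - log 2 (unif_prob S (\<lambda>w. (f w, g w)) (f w, g w))) =
     (\<Sum>w\<in>S. - log 2 (unif_prob S f (f w))) + (\<Sum>w\<in>S. - log 2 (unif_prob S g (g w)))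
     + (\<Sum>w\<in>S. log 2 (a (f w) * b (g w) / (c (f w, g w) * n)))"
  proof -
    have "(\<Sum>w\<in>S. - log 2 (unif_prob S (\<lambda>w. (f w, g w)) (f w, g w))) =
      (\<Sum>w\<in>S. - log 2 (unif_prob S f (f w)) - log 2 (unif_prob S g (g w)) + log 2 (a (f w) * b (g w) / (c (f w, g w) * n)))"
      by (rule sum.cong) (auto simp: eq)
    then show ?thesis by (simp add: sum.distrib sum_subtractf sum_negf)
  qed
  then have "(\<Sum>w\<in>S. - log 2 (unif_prob S (\<lambda>w. (f w, g w)) (f w, g w))) \<le>
     (\<Sum>w\<in>S. - log 2 (unif_prob S f (f w))) + (\<Sum>w\<in>S. - log 2 (unif_prob S g (g w)))"
    using L by linarith
  then show ?thesis unfolding entropy_expect[OF fin] using n unfolding n_def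
    by (simp add: add_divide_distrib[symmetric] divide_right_mono)
qed


lemma entropy_tuple:
  assumes fin: "finite S" and "finite A"
  shows "unif_entropy S (\<lambda>w. restrict (\<lambda>a. f a w) A) \<le> (\<Sum>a\<in>A. unif_entropy S (f a))"
  using assms(2)
proof (induction A rule: finite_induct)
  case empty
  show ?case using entropy_const[OF fin, of "restrict (\<lambda>a. f a undefined) {}"] by (simp add: restrict_def)
next
  case (insert a A)
  have eqf: "(\<lambda>w. restrict (\<lambda>a. f a w) (insert a A)) =
      (\<lambda>w. (\<lambda>p. (snd p)(a := fst p)) (f a w, restrict (\<lambda>a. f a w) A))"
    by (auto simp: restrict_def fun_eq_iff)
  have "unif_entropy S (\<lambda>w. restrict (\<lambda>a. f a w) (insert a A)) \<le>
        unif_entropy S (\<lambda>w. (f a w, restrict (\<lambda>a. f a w) A))"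
    unfolding eqf by (rule entropy_func[OF fin])
  also have "\<dots> \<le> unif_entropy S (f a) + unif_entropy S (\<lambda>w. restrict (\<lambda>a. f a w) A)"
    using entropy_pair[OF fin, of "f a" "\<lambda>w. restrict (\<lambda>a. f a w) A"] by simp
  also have "\<dots> \<le> unif_entropy S (f a) + (\<Sum>a\<in>A. unif_entropy S (f a))"
    using insert.IH by (simp add: restrict_def)
  finally show ?case by (simp only: sum.insert[OF insert.hyps])
qed

lemma xlogx_le1:
  assumes "0 \<le> x" "x \<le> (1::real)"
  shows "- x * log 2 x \<le> 1"
proof (cases "x = 0")
  case True then show ?thesis by simp
next
  case False
  then have x: "x > 0" using assms by simp
  have e2: "exp 1 \<ge> (2::real)" using exp_ge_add_one_self[of 1] by simp
  have "ln (1/2::real) \<le> 1/2 - 1" by (rule ln_le_minus_one) simp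
  then have l2: "ln 2 \<ge> (1/2::real)" by (simp add: ln_div)
  have "ln (1 / (exp 1 * x)) \<le> 1 / (exp 1 * x) - 1" using x by (intro ln_le_minus_one) simp
  moreover have "ln (1 / (exp 1 * x)) = - 1 - ln x" using x by (simp add: ln_div ln_mult)
  ultimately have "- ln x \<le> 1 / (exp 1 * x)" by simp
  then have "x * (- ln x) \<le> x * (1 / (exp 1 * x))" using x by (intro mult_left_mono) auto
  then have A: "- x * ln x \<le> 1 / exp 1" using x by simp
  have "- x * log 2 x = (- x * ln x) / ln 2" by (simp add: log_def)
  also have "\<dots> \<le> (1 / exp 1) / ln 2" using A l2 by (intro divide_right_mono) auto
  also have "\<dots> \<le> 1"
  proof -
    have "exp 1 * ln 2 \<ge> 2 * (1/2::real)" using e2 l2 by (intro mult_mono) auto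
    then show ?thesis using l2 by (simp add: field_simps)
  qed
  finally show ?thesis .
qed

lemma entropy_lower:
  assumes "finite S" "S \<noteq> {}" "\<And>w. w \<in> S \<Longrightarrow> unif_prob S f (f w) \<le> 2 powr (- c)"
  shows "unif_entropy S f \<ge> c"
proof -
  have "(\<Sum>w\<in>S. c) \<le> (\<Sum>w\<in>S. - log 2 (unif_prob S f (f w)))"
  proof (rule sum_mono)
    fix w assume w: "w \<in> S"
    have p: "unif_prob S f (f w) > 0" by (rule prob_pos[OF assms(1) w])
    have "log 2 (unif_prob S f (f w)) \<le> log 2 (2 powr (- c))"
      using assms(3)[OF w] p by (subst log_le_cancel_iff) auto
    then show "c \<le> - log 2 (unif_prob S f (f w))" by simp
  qed
  moreover have "real (card S) > 0" using assms by (simp add: card_gt_0_iff)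
  ultimately show ?thesis unfolding entropy_expect[OF assms(1)] by (simp add: le_divide_eq mult.commute)
qed


lemma entropy_err:
  assumes fin: "finite S" and BS: "B \<subseteq> S"
  shows "unif_entropy S (\<lambda>w. if w \<in> B then Some (U w) else None)
           \<le> 2 + (card B / card S) * log 2 (card (U ` B))"
proof (cases "S = {}")
  case True then show ?thesis using BS by (simp add: unif_entropy_def)
next
  case ne: False
  define E where "E w = (if w \<in> B then Some (U w) else None)" for w
  define n where "n = real (card S)"
  have n: "n > 0" using fin ne unfolding n_def by (simp add: card_gt_0_iff)
  have finB: "finite B" using fin BS finite_subset by blast
  define k where "k = real (card B)"
  define r where "r = real (card (S - B))"
  have kr: "k + r = n" unfolding k_def r_def n_def using BS fin
    by (metis card_Diff_subset finB card_mono le_add_diff_inverse of_nat_add)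
  have k0: "k \<ge> 0" "r \<ge> 0" unfolding k_def r_def by auto
  have split: "(\<Sum>w\<in>S. - log 2 (unif_prob S E (E w))) =
      (\<Sum>w\<in>S - B. - log 2 (unif_prob S E (E w))) + (\<Sum>w\<in>B. - log 2 (unif_prob S E (E w)))"
    using sum.subset_diff[OF BS fin] by simp
  have rest: "(\<Sum>w\<in>S - B. - log 2 (unif_prob S E (E w))) \<le> n"
  proof -
    have pr: "unif_prob S E (E w) = r / n" if "w \<in> S - B" for w
    proof -
      have "{x\<in>S. E x = E w} = S - B" using that unfolding E_def by auto
      then show ?thesis unfolding unif_prob_def r_def n_def by simp
    qed
    have "(\<Sum>w\<in>S - B. - log 2 (unif_prob S E (E w))) = r * (- log 2 (r / n))"
      using pr unfolding r_def by simp
    also have "\<dots> = n * (- (r / n) * log 2 (r / n))" using n by simp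
    also have "\<dots> \<le> n * 1"
      using xlogx_le1[of "r / n"] n k0 kr by (intro mult_left_mono) auto
    finally show ?thesis by simp
  qed
  have bpart: "(\<Sum>w\<in>B. - log 2 (unif_prob S E (E w))) \<le> n + k * log 2 (card (U ` B))"
  proof (cases "B = {}")
    case True then show ?thesis using n unfolding k_def by simp
  next
    case Bne: False
    have k: "k > 0" unfolding k_def using finB Bne by (simp add: card_gt_0_iff)
    have cpos: "real (card {x\<in>B. U x = U w}) > 0" if "w \<in> B" for w
      using fiber_card_pos[OF finB that, of U] by simp
    have pr: "- log 2 (unif_prob S E (E w)) = log 2 (n / card {x\<in>B. U x = U w})" if w: "w \<in> B" for w
    proof -
      have "{x\<in>S. E x = E w} = {x\<in>B. U x = U w}" using w BS unfolding E_def by auto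
      then have "unif_prob S E (E w) = card {x\<in>B. U x = U w} / n" unfolding unif_prob_def n_def by simp
      then show ?thesis using cpos[OF w] n by (simp add: log_divide)
    qed
    have "(\<Sum>w\<in>B. - log 2 (unif_prob S E (E w))) = (\<Sum>w\<in>B. log 2 (n / card {x\<in>B. U x = U w}))"
      using pr by (intro sum.cong) auto
    also have "\<dots> \<le> card B * log 2 ((\<Sum>w\<in>B. n / card {x\<in>B. U x = U w}) / card B)"
      by (rule jensen_log[OF finB Bne]) (use cpos n in auto)
    also have "(\<Sum>w\<in>B. n / card {x\<in>B. U x = U w}) = n * card (U ` B)"
    proof -
      have "(\<Sum>w\<in>B. n / card {x\<in>B. U x = U w}) = n * (\<Sum>w\<in>B. 1 / card {x\<in>B. U x = U w})"
        by (simp add: sum_distrib_left)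
      then show ?thesis using sum_inv_fiber[OF finB, of U] by simp
    qed
    finally have A: "(\<Sum>w\<in>B. - log 2 (unif_prob S E (E w))) \<le> k * log 2 (n * card (U ` B) / k)"
      unfolding k_def .
    have N: "real (card (U ` B)) > 0" using finB Bne by (simp add: card_gt_0_iff)
    have "k * log 2 (n * card (U ` B) / k) = k * log 2 (card (U ` B)) + n * (- (k / n) * log 2 (k / n))"
      using k n N by (simp add: log_divide log_mult algebra_simps)
    also have "\<dots> \<le> k * log 2 (card (U ` B)) + n * 1"
      using xlogx_le1[of "k / n"] n k0 kr by (intro add_left_mono mult_left_mono) auto
    finally show ?thesis using A by simp
  qed
  have "(\<Sum>w\<in>S. - log 2 (unif_prob S E (E w))) \<le> n * (2 + (k / n) * log 2 (card (U ` B)))"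
    using split rest bpart n by (simp add: algebra_simps)
  then have "unif_entropy S E \<le> 2 + (k / n) * log 2 (card (U ` B))"
    unfolding entropy_expect[OF fin] n_def[symmetric] using n by (simp add: divide_le_eq mult.commute)
  then show ?thesis unfolding E_def k_def n_def .
qed


lemma entropy_cong:
  assumes "\<And>w. w \<in> S \<Longrightarrow> f w = f' w"
  shows "unif_entropy S f = unif_entropy S f'"
proof -
  have p: "unif_prob S f v = unif_prob S f' v" for v
  proof -
    have "{w\<in>S. f w = v} = {w\<in>S. f' w = v}" using assms by auto
    then show ?thesis unfolding unif_prob_def by simp
  qed
  have "f ` S = f' ` S" using assms by (auto simp: image_def)
  then show ?thesis unfolding unif_entropy_def p by simp
qed

lemma card_L: "card {xs :: bool list. length xs = F} = 2 ^ F"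
  using card_lists_length_eq[of "UNIV :: bool set" F] by simp

lemma finite_L: "finite {xs :: bool list. length xs = F}"
  using finite_lists_length_eq[of "UNIV :: bool set" F] by simp

lemma W_finite: "finite (file_tuples D F)"
  unfolding file_tuples_def by (intro finite_PiE finite_L) simp

lemma W_card: "card (file_tuples D F) = 2 ^ (F * D)"
  unfolding file_tuples_def by (simp add: card_PiE card_L power_mult)

lemma W_ne: "file_tuples D F \<noteq> {}"
  unfolding file_tuples_def
  by (simp add: PiE_eq_empty_iff) (metis length_replicate)


lemma fiber_bound:
  assumes T: "T \<subseteq> {1..D}" and w: "w \<in> file_tuples D F"
  shows "unif_prob (file_tuples D F) (\<lambda>x. restrict x T) (restrict w T) \<le> 2 powr (- (real (card T) * F))"
proof -
  define L where "L = {xs :: bool list. length xs = F}"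
  define W where "W = file_tuples D F"
  have finT: "finite T" using T finite_subset by blast
  have sub: "{x\<in>W. restrict x T = restrict w T} \<subseteq> PiE {1..D} (\<lambda>j. if j \<in> T then {w j} else L)"
  proof
    fix x assume x: "x \<in> {x\<in>W. restrict x T = restrict w T}"
    then have xW: "x \<in> PiE {1..D} (\<lambda>_. L)" unfolding W_def file_tuples_def L_def by simp
    have "x j = w j" if "j \<in> T" for j using x that by (metis (mono_tags, lifting) mem_Collect_eq restrict_apply')
    then show "x \<in> PiE {1..D} (\<lambda>j. if j \<in> T then {w j} else L)"
      using xW by (auto simp: PiE_iff)
  qed
  have "card (PiE {1..D} (\<lambda>j. if j \<in> T then {w j} else L)) = (\<Prod>j\<in>{1..D}. if j \<in> T then 1 else 2 ^ F)"
    by (simp add: card_PiE L_def card_L if_distrib cong: if_cong)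
  also have "\<dots> = (2 ^ F) ^ card ({1..D} - T)"
    by (simp add: prod.If_cases Diff_eq)
  also have "card ({1..D} - T) = D - card T" using T by (simp add: card_Diff_subset finT)
  finally have cP: "card (PiE {1..D} (\<lambda>j. if j \<in> T then {w j} else L)) = (2 ^ F) ^ (D - card T)" .
  have finP: "finite (PiE {1..D} (\<lambda>j. if j \<in> T then {w j} else L))"
    by (intro finite_PiE) (auto simp: L_def finite_L)
  have c1: "card {x\<in>W. restrict x T = restrict w T} \<le> (2 ^ F) ^ (D - card T)"
    using card_mono[OF finP sub] cP by simp
  have tD: "card T \<le> D" using card_mono[OF _ T] by simp
  have "real (card {x\<in>W. restrict x T = restrict w T}) / real (card W) \<le> real ((2 ^ F) ^ (D - card T)) / real (card W)"
    using c1 by (intro divide_right_mono) (simp only: of_nat_le_iff, simp)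
  also have "\<dots> = 1 / (2::real) ^ (F * card T)"
  proof -
    have "(2::real) ^ (F * D) = 2 ^ (F * (D - card T)) * 2 ^ (F * card T)"
      using tD by (simp add: power_add[symmetric] add_mult_distrib2[symmetric])
    then show ?thesis unfolding W_def W_card by (simp add: power_mult)
  qed
  also have "\<dots> = 2 powr (- (real (card T) * F))"
    by (simp add: powr_minus powr_realpow[symmetric] mult.commute divide_inverse)
  finally show ?thesis unfolding unif_prob_def W_def .
qed


lemma cutset:
  fixes f :: "'i \<Rightarrow> (nat \<Rightarrow> bool list) \<Rightarrow> nat" and g :: "nat \<Rightarrow> ('i \<Rightarrow> nat) \<Rightarrow> bool list"
  assumes T: "T \<subseteq> {1..D}" and finA: "finite A"
    and Hf: "\<And>a. a \<in> A \<Longrightarrow> unif_entropy (file_tuples D F) (f a) \<le> c a * F"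
    and err: "\<And>j. j \<in> T \<Longrightarrow> real (card {w \<in> file_tuples D F. g j (restrict (\<lambda>a. f a w) A) \<noteq> w j})
                 / real (card (file_tuples D F)) < eps"
  shows "real (card T) * F \<le> (\<Sum>a\<in>A. c a) * F + 2 + real (card T) * eps * (real (card T) * F)"
proof -
  define W where "W = file_tuples D F"
  have finW: "finite W" and neW: "W \<noteq> {}" unfolding W_def by (rule W_finite, rule W_ne)
  have n: "real (card W) > 0" using finW neW by (simp add: card_gt_0_iff)
  have finT: "finite T" using T finite_subset by blast
  define t where "t = real (card T)"
  define Phi where "Phi w = restrict (\<lambda>a. f a w) A" for w
  define Bj where "Bj j = {w \<in> W. g j (Phi w) \<noteq> w j}" for j
  define B where "B = (\<Union>j\<in>T. Bj j)"
  have BW: "B \<subseteq> W" unfolding B_def Bj_def by auto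
  define q where "q = real (card B) / real (card W)"
  have q0: "q \<ge> 0" unfolding q_def by simp
  have qle: "q \<le> t * eps"
  proof -
    have "card B \<le> (\<Sum>j\<in>T. card (Bj j))" unfolding B_def by (rule card_UN_le[OF finT])
    then have "q \<le> (\<Sum>j\<in>T. real (card (Bj j))) / real (card W)"
      unfolding q_def by (intro divide_right_mono) (simp only: of_nat_sum[symmetric] of_nat_le_iff, simp)
    also have "\<dots> = (\<Sum>j\<in>T. real (card (Bj j)) / real (card W))" by (simp add: sum_divide_distrib)
    also have "\<dots> \<le> (\<Sum>j\<in>T. eps)"
      by (intro sum_mono less_imp_le) (use err in \<open>simp add: Bj_def W_def Phi_def\<close>)
    finally show ?thesis unfolding t_def by simp
  qed
  define U where "U w = restrict w T" for w :: "nat \<Rightarrow> bool list"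
  define E where "E w = (if w \<in> B then Some (U w) else None)" for w
  have U_eq: "U = (\<lambda>x. restrict x T)" by (simp add: U_def fun_eq_iff)
  define phi where "phi p = (case snd p of None \<Rightarrow> restrict (\<lambda>j. g j (fst p)) T | Some u \<Rightarrow> u)"
    for p :: "('i \<Rightarrow> nat) \<times> (nat \<Rightarrow> bool list) option"
  have Uphi: "U w = phi (Phi w, E w)" if w: "w \<in> W" for w
  proof (cases "w \<in> B")
    case True then show ?thesis unfolding phi_def E_def by simp
  next
    case False
    then have "g j (Phi w) = w j" if "j \<in> T" for j using w that unfolding B_def Bj_def by auto
    then show ?thesis using False unfolding phi_def E_def U_def by (auto simp: restrict_def)
  qed
  have low: "t * F \<le> unif_entropy W U"
    unfolding t_def
    by (rule entropy_lower[OF finW neW]) (use fiber_bound[OF T] in \<open>simp add: U_def W_def U_eq\<close>)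
  have "unif_entropy W U = unif_entropy W (\<lambda>w. phi (Phi w, E w))"
    by (rule entropy_cong) (use Uphi in auto)
  also have "\<dots> \<le> unif_entropy W (\<lambda>w. (Phi w, E w))" by (rule entropy_func[OF finW])
  also have "\<dots> \<le> unif_entropy W Phi + unif_entropy W E" by (rule entropy_pair[OF finW])
  also have "unif_entropy W Phi \<le> (\<Sum>a\<in>A. unif_entropy W (f a))"
    unfolding Phi_def by (rule entropy_tuple[OF finW finA])
  also have "\<dots> \<le> (\<Sum>a\<in>A. c a * F)" by (intro sum_mono) (use Hf in \<open>simp add: W_def\<close>)
  also have "unif_entropy W E \<le> 2 + q * log 2 (card (U ` B))"
    unfolding E_def q_def by (rule entropy_err[OF finW BW])
  also have "q * log 2 (card (U ` B)) \<le> t * eps * (t * F)"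
  proof (cases "B = {}")
    case True
    then have "q = 0" unfolding q_def by simp
    moreover have "t * eps * (t * F) \<ge> 0"
    proof (cases "T = {}")
      case True then show ?thesis unfolding t_def by simp
    next
      case False
      then obtain j where "j \<in> T" by blast
      from err[OF this] have "eps > 0" by (smt (verit) divide_nonneg_nonneg of_nat_0_le_iff)
      then show ?thesis unfolding t_def by simp
    qed
    ultimately show ?thesis by simp
  next
    case False
    have finB: "finite B" using finW BW finite_subset by blast
    have N: "real (card (U ` B)) \<ge> 1" using False finB by (simp add: Suc_le_eq card_gt_0_iff)
    have "U w \<in> PiE T (\<lambda>_. {xs :: bool list. length xs = F})" if "w \<in> B" for w
    proof -
      have w: "w \<in> PiE {1..D} (\<lambda>_. {xs :: bool list. length xs = F})"
        using that BW unfolding W_def file_tuples_def by auto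
      show ?thesis unfolding U_def restrict_PiE_iff using w T by (auto simp: PiE_iff)
    qed
    then have "U ` B \<subseteq> PiE T (\<lambda>_. {xs :: bool list. length xs = F})" by auto
    then have "card (U ` B) \<le> card (PiE T (\<lambda>_. {xs :: bool list. length xs = F}))"
      by (intro card_mono) (auto intro: finite_PiE finT finite_L)
    also have "\<dots> = 2 ^ (F * card T)" by (simp add: card_PiE finT card_L power_mult)
    finally have "real (card (U ` B)) \<le> real (2 ^ (F * card T))" by (simp only: of_nat_le_iff)
    then have "real (card (U ` B)) \<le> 2 ^ (F * card T)" by simp
    then have "log 2 (card (U ` B)) \<le> log 2 (2 ^ (F * card T))" using N by (subst log_le_cancel_iff) auto
    also have "\<dots> = t * F" unfolding t_def by (simp add: log_pow_cancel)
    finally have L: "log 2 (card (U ` B)) \<le> t * F" .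
    have L0: "log 2 (card (U ` B)) \<ge> 0" using N by simp
    have "q * log 2 (card (U ` B)) \<le> (t * eps) * log 2 (card (U ` B))"
      using qle L0 by (intro mult_right_mono) auto
    also have "\<dots> \<le> (t * eps) * (t * F)"
    proof -
      have "t * eps \<ge> 0" using qle q0 by simp
      then show ?thesis using L by (intro mult_left_mono) auto
    qed
    finally show ?thesis .
  qed
  finally show ?thesis using low unfolding t_def W_def by (simp add: sum_distrib_right)
qed


lemma asym:
  fixes t C :: real
  assumes t: "t \<ge> 0"
    and H: "\<And>eps F0. eps > 0 \<Longrightarrow> \<exists>F::nat. F \<ge> (F0::nat) \<and> F > 0 \<and> t * F \<le> C * F + 2 + t * eps * (t * F)"
  shows "t \<le> C"
proof (rule ccontr)
  assume "\<not> t \<le> C"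
  then have d: "t - C > 0" by simp
  define eps where "eps = (t - C) / (2 * (t * t + 1))"
  have "2 * (t * t + 1) > 0" by (simp add: add_pos_nonneg add_nonneg_pos)
  then have eps: "eps > 0" using d unfolding eps_def by (intro divide_pos_pos) auto
  have te: "t * eps * t \<le> (t - C) / 2"
  proof -
    have "t * eps * t = (t - C) / 2 * (t * t / (t * t + 1))" unfolding eps_def by (simp add: field_simps)
    also have "\<dots> \<le> (t - C) / 2 * 1"
      using d by (intro mult_left_mono) (auto simp: divide_le_eq_1 add_pos_nonneg add_nonneg_pos)
    finally show ?thesis by simp
  qed
  obtain F :: nat where F: "F \<ge> nat \<lceil>4 / (t - C)\<rceil> + 1" "F > 0"
    and ineq: "t * F \<le> C * F + 2 + t * eps * (t * F)"
    using H[OF eps] by blast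
  have "(t - C) * F \<le> 2 + (t * eps * t) * F" using ineq by (simp add: algebra_simps)
  also have "\<dots> \<le> 2 + (t - C) / 2 * F" using te by (intro add_left_mono mult_right_mono) auto
  finally have "(t - C) * F \<le> 4" by simp
  moreover have "real F > 4 / (t - C)" using F(1) by linarith
  then have "(t - C) * F > 4" using d by (simp add: field_simps)
  ultimately show False by simp
qed

lemma entropy_le_rate:
  assumes "finite S" "S \<noteq> {}" "real (card (f ` S)) \<le> 2 powr R"
  shows "unif_entropy S f \<le> R"
proof -
  have c: "real (card (f ` S)) > 0" using assms(1,2) by (simp add: card_gt_0_iff)
  have "unif_entropy S f \<le> log 2 (card (f ` S))" by (rule entropy_le_log_card[OF assms(1,2)])
  also have "\<dots> \<le> log 2 (2 powr R)" using c assms(3) by (subst log_le_cancel_iff) auto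
  finally show ?thesis by simp
qed


lemma bound_R1:
  fixes M N R1 R2 :: real
  assumes ach: "achievable h r D M N R1 R2"
    and L: "L \<subseteq> {1..h}" and S: "S \<subseteq> users h r" and SL: "\<And>k. k \<in> S \<Longrightarrow> k \<subseteq> L"
    and s1: "1 \<le> card S" and sD: "card S \<le> D"
  shows "real (card S * (D div card S)) \<le> card S * M + card L * N + card L * (D div card S) * R1"
proof -
  define s where "s = card S"
  define m where "m = D div s"
  define l where "l = card L"
  have finS: "finite S" using s1 card.infinite by fastforce
  have finL: "finite L" using L finite_subset by blast
  have s0: "s > 0" using s1 unfolding s_def by simp
  have smD: "s * m \<le> D" unfolding m_def by (simp add: mult.commute)
  obtain \<sigma> where \<sigma>: "bij_betw \<sigma> {0..<s} S" using ex_bij_betw_nat_finite[OF finS] unfolding s_def by blast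
  define \<tau> where "\<tau> = the_inv_into {0..<s} \<sigma>"
  have \<tau>1: "\<tau> k < s" "\<sigma> (\<tau> k) = k" if "k \<in> S" for k
  proof -
    have "bij_betw \<tau> S {0..<s}" unfolding \<tau>_def by (rule bij_betw_the_inv_into[OF \<sigma>])
    then show "\<tau> k < s" using that unfolding bij_betw_def by auto
    show "\<sigma> (\<tau> k) = k" unfolding \<tau>_def using that \<sigma> by (simp add: f_the_inv_into_f_bij_betw)
  qed
  have \<tau>2: "\<tau> (\<sigma> i) = i" if "i < s" for i
    using that \<sigma> unfolding \<tau>_def bij_betw_def by (simp add: the_inv_into_f_f)
  have \<sigma>S: "\<sigma> i \<in> S" if "i < s" for i using \<sigma> that unfolding bij_betw_def by auto
  define dm where "dm j = restrict (\<lambda>k. if k \<in> S then j * s + \<tau> k + 1 else 1) (users h r)" for j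
  have dm_dem: "dm j \<in> demands h r D" if "j < m" for j
  proof -
    have "j * s + \<tau> k + 1 \<le> D" if "k \<in> S" for k
    proof -
      have "j * s + \<tau> k + 1 \<le> j * s + s" using \<tau>1(1)[OF that] by simp
      also have "\<dots> = (j + 1) * s" by simp
      also have "\<dots> \<le> m * s" using \<open>j < m\<close> by (intro mult_right_mono) auto
      finally show ?thesis using smD by (simp add: mult.commute)
    qed
    moreover have "D \<ge> 1" using s1 sD by simp
    ultimately show ?thesis unfolding dm_def demands_def by auto
  qed
  define jf where "jf f = (f - 1) div s" for f :: nat
  define kf where "kf f = \<sigma> ((f - 1) mod s)" for f :: nat
  define T where "T = {1..s * m}"
  have jfm: "jf f < m" if "f \<in> T" for f
  proof -
    have "f - 1 < m * s" using that unfolding T_def by (auto simp: mult.commute)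
    then show ?thesis unfolding jf_def by (simp add: div_less_iff_less_mult s0)
  qed
  have kfS: "kf f \<in> S" for f unfolding kf_def using \<sigma>S s0 by simp
  have dmf: "dm (jf f) (kf f) = f" if "f \<in> T" for f
  proof -
    have "kf f \<in> users h r" using kfS S by auto
    moreover have "\<tau> (kf f) = (f - 1) mod s" unfolding kf_def using \<tau>2 s0 by simp
    moreover have "(f - 1) div s * s + (f - 1) mod s + 1 = f" using that unfolding T_def by simp
    ultimately show ?thesis unfolding dm_def jf_def using kfS by simp
  qed
  have TD: "T \<subseteq> {1..D}" unfolding T_def using smD by auto
  define A :: "(nat set + nat + nat \<times> nat) set"
    where "A = Inl ` S \<union> Inr ` (Inl ` L \<union> Inr ` (L \<times> {0..<m}))"
  have finA: "finite A" unfolding A_def using finS finL by auto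
  define cc :: "nat set + nat + nat \<times> nat \<Rightarrow> real"
    where "cc = case_sum (\<lambda>_. M) (case_sum (\<lambda>_. N) (\<lambda>_. R1))"
  have sumc: "(\<Sum>a\<in>A. cc a) = s * M + l * N + l * m * R1"
  proof -
    have "(\<Sum>a\<in>A. cc a) = (\<Sum>a\<in>Inl ` S. cc a) + (\<Sum>a\<in>Inr ` (Inl ` L \<union> Inr ` (L \<times> {0..<m})). cc a)"
      unfolding A_def by (rule sum.union_disjoint) (use finS finL in auto)
    also have "(\<Sum>a\<in>Inl ` S. cc a) = s * M" unfolding s_def cc_def by (simp add: sum.reindex)
    also have "(\<Sum>a\<in>Inr ` (Inl ` L \<union> Inr ` (L \<times> {0..<m})). cc a)
        = (\<Sum>x\<in>Inl ` L \<union> Inr ` (L \<times> {0..<m}). cc (Inr x))" by (simp add: sum.reindex)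
    also have "\<dots> = (\<Sum>x\<in>Inl ` L. cc (Inr x)) + (\<Sum>x\<in>Inr ` (L \<times> {0..<m}). cc (Inr x))"
      by (rule sum.union_disjoint) (use finL in auto)
    also have "\<dots> = l * N + l * m * R1" unfolding l_def cc_def by (simp add: sum.reindex card_cartesian_product)
    finally show ?thesis by simp
  qed
  show ?thesis
  proof -
    have H: "\<And>eps F0. eps > 0 \<Longrightarrow> \<exists>F::nat. F \<ge> (F0::nat) \<and> F > 0 \<and> real (s * m) * real F \<le> (real s * M + real l * N + real l * real m * R1) * real F + 2
                + real (s * m) * eps * (real (s * m) * real F)"
    proof -
      fix eps :: real and F0 :: nat assume eps: "eps > 0"
      obtain F1 where F1: "\<forall>F\<ge>F1. \<exists>V Z X Y Dec. scheme_ok h r D M N R1 R2 eps F V Z X Y Dec"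
        using ach eps unfolding achievable_def by blast
      define F where "F = max F1 (max F0 1)"
      obtain V Z X Y Dec where sch: "scheme_ok h r D M N R1 R2 eps F V Z X Y Dec"
        using F1 unfolding F_def by (meson max.cobounded1)
      define W where "W = file_tuples D F"
      have finW: "finite W" and neW: "W \<noteq> {}" unfolding W_def by (rule W_finite, rule W_ne)
      have hV: "\<And>j. j \<in> {1..h} \<Longrightarrow> unif_entropy W (V j) \<le> N * real F"
        and hZ: "\<And>k. k \<in> users h r \<Longrightarrow> unif_entropy W (Z k) \<le> M * real F"
        and hX: "\<And>d i. d \<in> demands h r D \<Longrightarrow> i \<in> {1..h} \<Longrightarrow> real (card (X i d ` W)) \<le> 2 powr (R1 * real F)"
        and hE: "\<And>d k. d \<in> demands h r D \<Longrightarrow> k \<in> users h r \<Longrightarrow>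
          real (card {w \<in> W. Dec k d (Z k w)
                   (\<lambda>i. if i \<in> k then Y i d k (X i d w) (V i w) else 0) \<noteq> w (d k)})
            / real (card W) < eps"
        using sch unfolding scheme_ok_def Let_def W_def by blast+
      define ff :: "nat set + nat + nat \<times> nat \<Rightarrow> (nat \<Rightarrow> bool list) \<Rightarrow> nat"
        where "ff = case_sum (\<lambda>k. Z k) (case_sum (\<lambda>i. V i) (\<lambda>(i, j). X i (dm j)))"
      define g :: "nat \<Rightarrow> (nat set + nat + nat \<times> nat \<Rightarrow> nat) \<Rightarrow> bool list"
        where "g f P = Dec (kf f) (dm (jf f)) (P (Inl (kf f)))
           (\<lambda>i. if i \<in> kf f then Y i (dm (jf f)) (kf f) (P (Inr (Inr (i, jf f)))) (P (Inr (Inl i))) else 0)" for f P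
      have cut: "real (card T) * F \<le> (\<Sum>a\<in>A. cc a) * F + 2 + real (card T) * eps * (real (card T) * F)"
      proof (rule cutset[OF TD finA])
        fix a assume a: "a \<in> A"
        then consider (Z) k where "k \<in> S" "a = Inl k" | (V) i where "i \<in> L" "a = Inr (Inl i)"
          | (X) i j where "i \<in> L" "j < m" "a = Inr (Inr (i, j))" unfolding A_def by auto
        then show "unif_entropy (file_tuples D F) (ff a) \<le> cc a * F"
        proof cases
          case Z then show ?thesis using hZ S unfolding ff_def cc_def W_def by auto
        next
          case V then show ?thesis using hV L unfolding ff_def cc_def W_def by auto
        next
          case X
          have "unif_entropy W (X i (dm j)) \<le> R1 * F"
            by (rule entropy_le_rate[OF finW neW]) (use hX dm_dem X L in auto)
          then show ?thesis using X unfolding ff_def cc_def W_def by simp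
        qed
      next
        fix f assume f: "f \<in> T"
        define k where "k = kf f"
        define d where "d = dm (jf f)"
        have k: "k \<in> S" unfolding k_def by (rule kfS)
        have eq: "g f (restrict (\<lambda>a. ff a w) A) = Dec k d (Z k w)
                   (\<lambda>i. if i \<in> k then Y i d k (X i d w) (V i w) else 0)" for w
        proof -
          have "(\<lambda>i. if i \<in> k then Y i d k (restrict (\<lambda>a. ff a w) A (Inr (Inr (i, jf f)))) (restrict (\<lambda>a. ff a w) A (Inr (Inl i))) else 0)
              = (\<lambda>i. if i \<in> k then Y i d k (X i d w) (V i w) else 0)"
          proof
            fix i show "(if i \<in> k then Y i d k (restrict (\<lambda>a. ff a w) A (Inr (Inr (i, jf f)))) (restrict (\<lambda>a. ff a w) A (Inr (Inl i))) else 0)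
              = (if i \<in> k then Y i d k (X i d w) (V i w) else 0)"
            proof (cases "i \<in> k")
              case True
              then have "i \<in> L" using SL k by auto
              then show ?thesis using True jfm[OF f] unfolding A_def ff_def d_def by auto
            qed simp
          qed
          moreover have "restrict (\<lambda>a. ff a w) A (Inl k) = Z k w" using k unfolding A_def ff_def by simp
          ultimately show ?thesis unfolding g_def k_def[symmetric] d_def[symmetric] by simp
        qed
        have "real (card {w \<in> W. Dec k d (Z k w)
                   (\<lambda>i. if i \<in> k then Y i d k (X i d w) (V i w) else 0) \<noteq> w (d k)})
            / real (card W) < eps"
          using hE[OF dm_dem[OF jfm[OF f]]] k S unfolding d_def by auto
        moreover have "d k = f" using dmf[OF f] unfolding d_def k_def .
        ultimately show "real (card {w \<in> file_tuples D F. g f (restrict (\<lambda>a. ff a w) A) \<noteq> w f}) /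
            real (card (file_tuples D F)) < eps" unfolding eq W_def by simp
      qed
      have cT: "card T = s * m" unfolding T_def by simp
      show "\<exists>F::nat. F \<ge> F0 \<and> F > 0 \<and> real (s * m) * real F \<le> (real s * M + real l * N + real l * real m * R1) * real F + 2
                + real (s * m) * eps * (real (s * m) * real F)"
        using cut unfolding cT sumc F_def by (intro exI[of _ F]) (auto simp: F_def)
    qed
    have "real (s * m) \<le> real s * M + real l * N + real l * real m * R1" by (rule asym[OF _ H]) simp_all
    then show ?thesis unfolding s_def m_def l_def by simp
  qed
qed


lemma bound_R2:
  fixes M N R1 R2 :: real
  assumes ach: "achievable h r D M N R1 R2"
    and r1: "1 \<le> r" and rh: "r \<le> h" and D1: "1 \<le> D"
  shows "real D \<le> M + real r * real D * R2"
proof -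
  define k0 where "k0 = {1..r}"
  have k0u: "k0 \<in> users h r" unfolding k0_def users_def using rh by auto
  have ck0: "card k0 = r" unfolding k0_def by simp
  have fink0: "finite k0" unfolding k0_def by simp
  define dm where "dm j = restrict (\<lambda>k. j + 1) (users h r)" for j :: nat
  have dm_dem: "dm j \<in> demands h r D" if "j < D" for j
    using that unfolding dm_def demands_def by auto
  define T where "T = {1..D}"
  have dmf: "dm (f - 1) k0 = f" if "f \<in> T" for f using that k0u unfolding dm_def T_def by auto
  define A :: "(nat set + nat + nat \<times> nat) set"
    where "A = Inl ` {k0} \<union> Inr ` Inr ` (k0 \<times> {0..<D})"
  have finA: "finite A" unfolding A_def using fink0 by auto
  define cc :: "nat set + nat + nat \<times> nat \<Rightarrow> real"
    where "cc = case_sum (\<lambda>_. M) (case_sum (\<lambda>_. 0) (\<lambda>_. R2))"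
  have sumc: "(\<Sum>a\<in>A. cc a) = M + real r * real D * R2"
  proof -
    have "(\<Sum>a\<in>A. cc a) = (\<Sum>a\<in>Inl ` {k0}. cc a) + (\<Sum>a\<in>Inr ` Inr ` (k0 \<times> {0..<D}). cc a)"
      unfolding A_def by (rule sum.union_disjoint) (use fink0 in auto)
    also have "\<dots> = M + real r * real D * R2"
      unfolding cc_def by (simp add: sum.reindex card_cartesian_product ck0)
    finally show ?thesis .
  qed
  have H: "\<And>eps F0. eps > 0 \<Longrightarrow> \<exists>F::nat. F \<ge> (F0::nat) \<and> F > 0 \<and> real D * real F \<le> (M + real r * real D * R2) * real F + 2
                + real D * eps * (real D * real F)"
  proof -
    fix eps :: real and F0 :: nat assume eps: "eps > 0"
    obtain F1 where F1: "\<forall>F\<ge>F1. \<exists>V Z X Y Dec. scheme_ok h r D M N R1 R2 eps F V Z X Y Dec"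
      using ach eps unfolding achievable_def by blast
    define F where "F = max F1 (max F0 1)"
    obtain V Z X Y Dec where sch: "scheme_ok h r D M N R1 R2 eps F V Z X Y Dec"
      using F1 unfolding F_def by (meson max.cobounded1)
    define W where "W = file_tuples D F"
    have finW: "finite W" and neW: "W \<noteq> {}" unfolding W_def by (rule W_finite, rule W_ne)
    have hZ: "\<And>k. k \<in> users h r \<Longrightarrow> unif_entropy W (Z k) \<le> M * real F"
      and hY: "\<And>d i k. d \<in> demands h r D \<Longrightarrow> i \<in> {1..h} \<Longrightarrow> k \<in> users h r \<Longrightarrow> i \<in> k \<Longrightarrow>
          real (card ((\<lambda>w. Y i d k (X i d w) (V i w)) ` W)) \<le> 2 powr (R2 * real F)"
      and hE: "\<And>d k. d \<in> demands h r D \<Longrightarrow> k \<in> users h r \<Longrightarrow>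
        real (card {w \<in> W. Dec k d (Z k w)
                 (\<lambda>i. if i \<in> k then Y i d k (X i d w) (V i w) else 0) \<noteq> w (d k)})
          / real (card W) < eps"
      using sch unfolding scheme_ok_def Let_def W_def by blast+
    define ff :: "nat set + nat + nat \<times> nat \<Rightarrow> (nat \<Rightarrow> bool list) \<Rightarrow> nat"
      where "ff = case_sum (\<lambda>k. Z k) (case_sum (\<lambda>i w. 0) (\<lambda>(i, j) w. Y i (dm j) k0 (X i (dm j) w) (V i w)))"
    define g :: "nat \<Rightarrow> (nat set + nat + nat \<times> nat \<Rightarrow> nat) \<Rightarrow> bool list"
      where "g f P = Dec k0 (dm (f - 1)) (P (Inl k0))
         (\<lambda>i. if i \<in> k0 then P (Inr (Inr (i, f - 1))) else 0)" for f P
    have TD: "T \<subseteq> {1..D}" unfolding T_def by simp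
    have cut: "real (card T) * F \<le> (\<Sum>a\<in>A. cc a) * F + 2 + real (card T) * eps * (real (card T) * F)"
    proof (rule cutset[OF TD finA])
      fix a assume a: "a \<in> A"
      then consider (Z) "a = Inl k0" | (Y) i j where "i \<in> k0" "j < D" "a = Inr (Inr (i, j))"
        unfolding A_def by auto
      then show "unif_entropy (file_tuples D F) (ff a) \<le> cc a * F"
      proof cases
        case Z then show ?thesis using hZ k0u unfolding ff_def cc_def W_def by auto
      next
        case Y
        have i: "i \<in> {1..h}" using Y(1) rh unfolding k0_def by auto
        have "unif_entropy W (\<lambda>w. Y i (dm j) k0 (X i (dm j) w) (V i w)) \<le> R2 * F"
          by (rule entropy_le_rate[OF finW neW]) (use hY dm_dem Y i k0u in auto)
        then show ?thesis using Y unfolding ff_def cc_def W_def by simp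
      qed
    next
      fix f assume f: "f \<in> T"
      define d where "d = dm (f - 1)"
      have fD: "f - 1 < D" using f unfolding T_def by auto
      have eq: "g f (restrict (\<lambda>a. ff a w) A) = Dec k0 d (Z k0 w)
                 (\<lambda>i. if i \<in> k0 then Y i d k0 (X i d w) (V i w) else 0)" for w
      proof -
        have "(\<lambda>i. if i \<in> k0 then restrict (\<lambda>a. ff a w) A (Inr (Inr (i, f - 1))) else 0)
            = (\<lambda>i. if i \<in> k0 then Y i d k0 (X i d w) (V i w) else 0)"
          using fD unfolding A_def ff_def d_def by (auto simp: fun_eq_iff)
        moreover have "restrict (\<lambda>a. ff a w) A (Inl k0) = Z k0 w" unfolding A_def ff_def by simp
        ultimately show ?thesis unfolding g_def d_def[symmetric] by simp
      qed
      have "real (card {w \<in> W. Dec k0 d (Z k0 w)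
                 (\<lambda>i. if i \<in> k0 then Y i d k0 (X i d w) (V i w) else 0) \<noteq> w (d k0)})
          / real (card W) < eps"
        using hE[OF dm_dem[OF fD] k0u] unfolding d_def by auto
      moreover have "d k0 = f" using dmf[OF f] unfolding d_def .
      ultimately show "real (card {w \<in> file_tuples D F. g f (restrict (\<lambda>a. ff a w) A) \<noteq> w f}) /
          real (card (file_tuples D F)) < eps" unfolding eq W_def by simp
    qed
    have cT: "card T = D" unfolding T_def by simp
    show "\<exists>F::nat. F \<ge> F0 \<and> F > 0 \<and> real D * real F \<le> (M + real r * real D * R2) * real F + 2
                + real D * eps * (real D * real F)"
      using cut unfolding cT sumc F_def by (intro exI[of _ F]) (auto simp: F_def)
  qed
  show ?thesis by (rule asym[OF _ H]) simp_all
qed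


lemma alg1:
  fixes s l m M N R1 :: real
  assumes "l > 0" "m > 0" "s * m \<le> s * M + l * N + l * m * R1"
  shows "1 / l * (s - (s * M + l * N) / m) \<le> R1"
proof -
  have "1 / l * (s - (s * M + l * N) / m) = (s * m - (s * M + l * N)) / (l * m)"
    using assms(1,2) by (simp add: field_simps)
  also have "\<dots> \<le> (l * m * R1) / (l * m)"
    using assms by (intro divide_right_mono) auto
  also have "\<dots> = R1" using assms(1,2) by simp
  finally show ?thesis .
qed

lemma bound_R1_L:
  fixes M N R1 R2 :: real
  assumes ach: "achievable h r D M N R1 R2"
    and l1: "1 \<le> l" and lh: "l \<le> h" and s1: "1 \<le> s" and sD: "s \<le> D" and sl: "s \<le> l choose r"
  shows "1 / real l * (real s - (real s * M + real l * N) / real (D div s)) \<le> R1"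
proof -
  define L where "L = {1..l}"
  have "card {B. B \<subseteq> L \<and> card B = r} = l choose r" unfolding L_def by (simp add: n_subsets)
  then obtain S where S: "S \<subseteq> {B. B \<subseteq> L \<and> card B = r}" "card S = s"
    using obtain_subset_with_card_n[of s "{B. B \<subseteq> L \<and> card B = r}"] sl by auto
  have LH: "L \<subseteq> {1..h}" unfolding L_def using lh by auto
  have Su: "S \<subseteq> users h r" using S(1) LH unfolding users_def by blast
  have cL: "card L = l" unfolding L_def by simp
  have "real (card S * (D div card S)) \<le> card S * M + card L * N + card L * (D div card S) * R1"
    by (rule bound_R1[OF ach LH Su]) (use S s1 sD in auto)
  then have A: "real s * real (D div s) \<le> real s * M + real l * N + real l * real (D div s) * R1"
    using S(2) cL by simp
  have m: "real (D div s) > 0" using s1 sD by (simp add: div_greater_zero_iff)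
  show ?thesis by (rule alg1) (use l1 m A in auto)
qed

lemma choose_ge_aux: "1 \<le> r \<Longrightarrow> Suc y \<le> (y + r) choose r"
proof (induction r rule: dec_induct)
  case base then show ?case by simp
next
  case (step n)
  have "(y + Suc n) choose (Suc n) = ((y + n) choose n) + ((y + n) choose (Suc n))" by simp
  then show ?case using step.IH by simp
qed

lemma choose_ge: "1 \<le> r \<Longrightarrow> x \<le> (x + r - 1) choose r"
proof (cases x)
  case (Suc y)
  assume "1 \<le> r"
  then show ?thesis using choose_ge_aux[of r y] Suc by simp
qed simp


theorem theorem2:
  fixes h r D :: nat and M N R1 R2 :: real
  assumes "1 \<le> r" and "r < h" and "h choose r \<le> D"
    and "0 \<le> M" and "0 \<le> N"
    and "0 < M + real r * N" and "M + real r * N \<le> real D"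
    and "achievable h r D M N R1 R2"
  shows "(\<forall>l \<in> {r..h}. \<forall>s \<in> {1..min D (l choose r)}.
            R1 \<ge> (1 / real l) * (real s - (real s * M + real l * N) / real (D div s)))
       \<and> (\<forall>x \<in> {1..min D (h choose r)}.
            let u = min (x + r - 1) h in
            R1 \<ge> (1 / real u) * (real x - (real x * M + real u * N) / real (D div x)))
       \<and> R2 \<ge> (1 / real r) * (1 - M / real D)"
proof (intro conjI ballI)
  have ach: "achievable h r D M N R1 R2" by fact
  fix l s assume l: "l \<in> {r..h}" and s: "s \<in> {1..min D (l choose r)}"
  show "R1 \<ge> (1 / real l) * (real s - (real s * M + real l * N) / real (D div s))"
    by (rule bound_R1_L[OF ach]) (use l s assms(1) in auto)
next
  have ach: "achievable h r D M N R1 R2" by fact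
  fix x assume x: "x \<in> {1..min D (h choose r)}"
  define u where "u = min (x + r - 1) h"
  have xu: "x \<le> u choose r"
  proof (cases "x + r - 1 \<le> h")
    case True then have "u = x + r - 1" unfolding u_def by simp
    then show ?thesis using choose_ge[OF assms(1), of x] by simp
  next
    case False then have "u = h" unfolding u_def by simp
    then show ?thesis using x by simp
  qed
  have "R1 \<ge> (1 / real u) * (real x - (real x * M + real u * N) / real (D div x))"
    by (rule bound_R1_L[OF ach]) (use x xu assms(1,2) in \<open>auto simp: u_def\<close>)
  then show "let u = min (x + r - 1) h in
            R1 \<ge> (1 / real u) * (real x - (real x * M + real u * N) / real (D div x))"
    unfolding u_def Let_def .
next
  have ach: "achievable h r D M N R1 R2" by fact
  have D1: "1 \<le> D"
  proof -
    have "0 < h choose r" using assms(2) by (intro zero_less_binomial) simp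
    then show ?thesis using assms(3) by linarith
  qed
  have B: "real D \<le> M + real r * real D * R2"
    by (rule bound_R2[OF ach]) (use assms(1,2) D1 in auto)
  have r0: "real r > 0" using assms(1) by simp
  have d0: "real D > 0" using D1 by simp
  have "(1 / real r) * (1 - M / real D) = (real D - M) / (real r * real D)"
    using r0 d0 by (simp add: field_simps)
  also have "\<dots> \<le> (real r * real D * R2) / (real r * real D)"
    using B r0 d0 by (intro divide_right_mono) auto
  also have "\<dots> = R2" using r0 d0 by simp
  finally show "R2 \<ge> (1 / real r) * (1 - M / real D)" .
qed

end
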